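(* Let $\mathcal{M}=(E,\mathcal{C})$ be a loopless oriented matroid with ground set $E=\{e_1,\dots,e_m\}$ totally ordered by $e_1\prec e_2\prec\cdots\prec e_m$, and let $\mathscr{N}_k$ ($0\le k\le m$) and $\psi_k:\mathscr{N}_{k-1}\to\mathscr{N}_k$ ($1\le k\le m$) be as defined in the context. Then each $\psi_k$ is a bijection from $\mathscr{N}_{k-1}$ onto $\mathscr{N}_k$, and consequently the map sending $A\in A(\mathcal{M})$ to the unique set $N\subseteq E$ with $\psi_m\circ\psi_{m-1}\circ\cdots\circ\psi_1(\emptyset,A)=(N,\emptyset)$ is a bijection from $A(\mathcal{M})$ onto $\mathrm{NBC}(\underline{\mathcal{M}})$.
   Context: A signed subset of a finite set $E$ is a pair $X=(X^+,X^-)$ of disjoint subsets of $E$; its support is $\underline{X}=X^+\cup X^-$ and $-X=(X^-,X^+)$. An oriented matroid $\mathcal{M}=(E,\mathcal{C})$ is a finite set $E$ with a collection $\mathcal{C}$ of signed subsets (signed circuits) such that: (C1) the empty signed set is not in $\mathcal{C}$; (C2) $\mathcal{C}=-\mathcal{C}$; (C3) if $X,Y\in\mathcal{C}$ and $\underline{X}\subseteq\underline{Y}$ then $X=\pm Y$; (C4) if $X,Y\in\mathcal{C}$, $X\neq -Y$, $X\ne Y$ and $e\in X^+\cap Y^-$, then there is $Z\in\mathcal{C}$ with $Z^+\subseteq X^+\cup Y^+-\{e\}$ and $Z^-\subseteq X^-\cup Y^--\{e\}$. The underlying matroid $\underline{\mathcal{M}}$ has circuits $\{\underline{X}:X\in\mathcal{C}\}$.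 A loop is a single element forming a circuit; $\mathcal{M}$ is loopless if it has none. A signed circuit $X$ is positive if $X^-=\emptyset$; $\mathcal{M}$ is acyclic if it has no positive circuits. For $A\subseteq E$, the reorientation ${}_{-A}\mathcal{M}$ has signed circuits ${}_{-A}X$ with ${}_{-A}X^+=(X^+-A)\cup(X^-\cap A)$, ${}_{-A}X^-=(X^--A)\cup(X^+\cap A)$; for a single element we write ${}_{-e}$. $A(\mathcal{M})=\{A\subseteq E: {}_{-A}\mathcal{M}\text{ is acyclic}\}$. For $X\subseteq E$: deletion $\mathcal{M}\backslash X$ on $E-X$ has signed circuits $\{Y\in\mathcal{C}:\underline{Y}\subseteq E-X\}$; contraction $\mathcal{M}/X$ on $E-X$ has signed circuits the inclusion-minimal nonempty members (by support) of $\{(Y^+-X,Y^--X):Y\in\mathcal{C},\ \underline{Y}-X\neq\emptyset\}$. A broken circuit of $\underline{\mathcal{M}}$ is a circuit with its $\prec$-maximal element removed; $N\subseteq E$ is an NBC subset if it contains no broken circuit; $\mathrm{NBC}(\underline{\mathcal{M}})$ is the set of NBC subsets. Let $E_k=\{e_1,\dots,e_k\}$. For $N_k\subseteq E_k$ put $N_k^c=E_k-N_k$. $\mathscr{N}_k$ is the set of pairs $(N_k,A_k)$ with $N_k\subseteq E_k$, $A_k\subseteq E-E_k$, $N_k\in\mathrm{NBC}(\underline{\mathcal{M}})$, and $\mathcal{M}_k:={}_{-A_k}(\mathcal{M}\backslash N_k^c/N_k)$ (an oriented matroid on $E-E_k$) acyclic. For $(N_{k-1},A_{k-1})\in\mathscr{N}_{k-1}$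 with $\mathcal{M}_{k-1}={}_{-A_{k-1}}(\mathcal{M}\backslash N_{k-1}^c/N_{k-1})$, define $\psi_k(N_{k-1},A_{k-1})$ to be $(N_{k-1}\cup\{e_k\},A_{k-1})$ if $e_k\notin A_{k-1}$ and ${}_{-e_k}\mathcal{M}_{k-1}$ is acyclic; $(N_{k-1},A_{k-1})$ if $e_k\notin A_{k-1}$ and ${}_{-e_k}\mathcal{M}_{k-1}$ is not acyclic; $(N_{k-1},A_{k-1}-\{e_k\})$ if $e_k\in A_{k-1}$. *)

theory Defs
  imports Main
begin

text \<open>Signed subsets of a ground set are pairs (X+, X-) of sets.\<close>
type_synonym 'a signed = "'a set \<times> 'a set"

definition supp :: "'a signed \<Rightarrow> 'a set" where
  "supp X = fst X \<union> snd X"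

definition sneg :: "'a signed \<Rightarrow> 'a signed" where
  "sneg X = (snd X, fst X)"

definition signed_subset :: "'a set \<Rightarrow> 'a signed \<Rightarrow> bool" where
  "signed_subset E X \<longleftrightarrow> fst X \<subseteq> E \<and> snd X \<subseteq> E \<and> fst X \<inter> snd X = {}"

definition oriented_matroid :: "'a set \<Rightarrow> 'a signed set \<Rightarrow> bool" where
  "oriented_matroid E C \<longleftrightarrow>
     finite E \<and>
     (\<forall>X\<in>C. signed_subset E X) \<and>
     ({}, {}) \<notin> C \<and>
     (\<forall>X\<in>C. sneg X \<in> C) \<and>
     (\<forall>X\<in>C. \<forall>Y\<in>C. supp X \<subseteq> supp Y \<longrightarrow> X = Y \<or> X = sneg Y) \<and>
     (\<forall>X\<in>C. \<forall>Y\<in>C. \<forall>e. X \<noteq> sneg Y \<and> X \<noteq> Y \<and> e \<in> fst X \<inter> snd Y \<longrightarrow>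
        (\<exists>Z\<in>C. fst Z \<subseteq> (fst X \<union> fst Y) - {e} \<and> snd Z \<subseteq> (snd X \<union> snd Y) - {e}))"

definition loopless :: "'a signed set \<Rightarrow> bool" where
  "loopless C \<longleftrightarrow> \<not> (\<exists>X\<in>C. \<exists>e. supp X = {e})"

definition acyclic_om :: "'a signed set \<Rightarrow> bool" where
  "acyclic_om C \<longleftrightarrow> \<not> (\<exists>X\<in>C. snd X = {})"

definition reor :: "'a set \<Rightarrow> 'a signed \<Rightarrow> 'a signed" where
  "reor A X = ((fst X - A) \<union> (snd X \<inter> A), (snd X - A) \<union> (fst X \<inter> A))"

definition reorient :: "'a set \<Rightarrow> 'a signed set \<Rightarrow> 'a signed set" where
  "reorient A C = reor A ` C"

definition acyc_reorientations :: "'a set \<Rightarrow> 'a signed set \<Rightarrow> 'a set set" where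
  "acyc_reorientations E C = {A. A \<subseteq> E \<and> acyclic_om (reorient A C)}"

definition om_delete :: "'a set \<Rightarrow> 'a signed set \<Rightarrow> 'a set \<Rightarrow> 'a signed set" where
  "om_delete E C X = {Y\<in>C. supp Y \<subseteq> E - X}"

definition om_contract :: "'a signed set \<Rightarrow> 'a set \<Rightarrow> 'a signed set" where
  "om_contract C X =
     (let S = {(fst Y - X, snd Y - X) | Y. Y \<in> C \<and> supp Y - X \<noteq> {}}
      in {Z\<in>S. \<forall>W\<in>S. \<not> (supp W \<subset> supp Z)})"

text \<open>Broken circuits and NBC sets of the underlying matroid, order = the linear order of 'a.\<close>
definition NBC :: "'a::linorder set \<Rightarrow> 'a signed set \<Rightarrow> 'a set set" where
  "NBC E C = {N. N \<subseteq> E \<and> (\<forall>X\<in>C. \<not> (supp X - {Max (supp X)} \<subseteq> N))}"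

text \<open>e_k (1 \<le> k \<le> m) is the k-th smallest element of E; E_k = {e_1,...,e_k}.\<close>
definition elt :: "'a::linorder set \<Rightarrow> nat \<Rightarrow> 'a" where
  "elt E k = sorted_list_of_set E ! (k - 1)"

definition Eprefix :: "'a::linorder set \<Rightarrow> nat \<Rightarrow> 'a set" where
  "Eprefix E k = set (take k (sorted_list_of_set E))"

definition Mk :: "'a::linorder set \<Rightarrow> 'a signed set \<Rightarrow> nat \<Rightarrow> 'a set \<Rightarrow> 'a set \<Rightarrow> 'a signed set" where
  "Mk E C k N A = reorient A (om_contract (om_delete E C (Eprefix E k - N)) N)"

definition Nset :: "'a::linorder set \<Rightarrow> 'a signed set \<Rightarrow> nat \<Rightarrow> ('a set \<times> 'a set) set" where
  "Nset E C k = {(N, A). N \<subseteq> Eprefix E k \<and> A \<subseteq> E - Eprefix E k \<and> N \<in> NBC E C \<and>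
                         acyclic_om (Mk E C k N A)}"

definition psi :: "'a::linorder set \<Rightarrow> 'a signed set \<Rightarrow> nat \<Rightarrow> 'a set \<times> 'a set \<Rightarrow> 'a set \<times> 'a set" where
  "psi E C k NA =
     (let N = fst NA; A = snd NA; e = elt E k in
      if e \<notin> A then
        (if acyclic_om (reorient {e} (Mk E C (k - 1) N A)) then (N \<union> {e}, A) else (N, A))
      else (N, A - {e}))"

fun psi_comp :: "'a::linorder set \<Rightarrow> 'a signed set \<Rightarrow> nat \<Rightarrow> 'a set \<times> 'a set \<Rightarrow> 'a set \<times> 'a set" where
  "psi_comp E C 0 = id"
| "psi_comp E C (Suc k) = psi E C (Suc k) \<circ> psi_comp E C k"

end

theory Submission
  imports Defs
begin

definition elimax :: "'a signed set \<Rightarrow> bool" where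
 "elimax C \<longleftrightarrow> (\<forall>X\<in>C. \<forall>Y\<in>C. \<forall>e. X \<noteq> sneg Y \<and> X \<noteq> Y \<and> e \<in> fst X \<inter> snd Y \<longrightarrow>
        (\<exists>Z\<in>C. fst Z \<subseteq> (fst X \<union> fst Y) - {e} \<and> snd Z \<subseteq> (snd X \<union> snd Y) - {e}))"

definition goodfam :: "'a signed set \<Rightarrow> bool" where
 "goodfam C \<longleftrightarrow> elimax C \<and> (\<forall>X\<in>C. fst X \<inter> snd X = {} \<and> finite (supp X))"

lemma elimD:
  assumes "elimax C" "X \<in> C" "Y \<in> C" "X \<noteq> sneg Y" "X \<noteq> Y" "e \<in> fst X" "e \<in> snd Y"
  obtains Z where "Z \<in> C" "fst Z \<subseteq> (fst X \<union> fst Y) - {e}" "snd Z \<subseteq> (snd X \<union> snd Y) - {e}"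
  using assms unfolding elimax_def by blast

lemma supp_sneg[simp]: "supp (sneg X) = supp X" by (auto simp: supp_def sneg_def)
lemma supp_reor[simp]: "supp (reor A X) = supp X" by (auto simp: supp_def reor_def)
lemma reor_reor[simp]: "reor A (reor A X) = X" by (cases X) (auto simp: reor_def)
lemma sneg_reor: "sneg (reor A X) = reor A (sneg X)" by (auto simp: sneg_def reor_def)
lemma sneg_sneg[simp]: "sneg (sneg X) = X" by (simp add: sneg_def)

lemma conf_lemma:
  assumes good: "goodfam G" and indep: "\<forall>X\<in>G. \<not> supp X \<subseteq> T" and Y: "Y \<in> G"
  shows "W \<in> G \<Longrightarrow> supp W - T \<subset> supp Y - T \<Longrightarrow>
     \<exists>Z\<in>G. supp Z - T \<subset> supp Y - T \<and> fst Z - T \<subseteq> fst Y \<and> snd Z - T \<subseteq> snd Y"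
proof (induction "card ((fst W \<inter> snd Y \<union> snd W \<inter> fst Y) - T)" arbitrary: W rule: less_induct)
  case less
  have dY: "fst Y \<inter> snd Y = {}" and fY: "finite (supp Y)" using good Y by (auto simp: goodfam_def)
  show ?case
  proof (cases "(fst W \<inter> snd Y \<union> snd W \<inter> fst Y) - T = {}")
    case True
    have "fst W - T \<subseteq> fst Y" "snd W - T \<subseteq> snd Y" using less.prems True by (auto simp: supp_def)
    then show ?thesis using less.prems by blast
  next
    case False
    then obtain h where h: "h \<in> (fst W \<inter> snd Y \<union> snd W \<inter> fst Y) - T" by blast
    have ne: "supp W - T \<noteq> supp Y - T" using less.prems by blast
    have WY: "W \<noteq> Y" "W \<noteq> sneg Y" "Y \<noteq> sneg W" using ne by auto
    have el: "elimax G" using good by (simp add: goodfam_def)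
    obtain Z where Z: "Z \<in> G" "fst Z \<subseteq> fst W \<union> fst Y - {h}" "snd Z \<subseteq> snd W \<union> snd Y - {h}"
    proof (cases "h \<in> fst W \<inter> snd Y")
      case True
      then show ?thesis using elimD[OF el less.prems(1) Y WY(2) WY(1)] that by auto
    next
      case False
      then have "h \<in> fst Y" "h \<in> snd W" using h by auto
      then show ?thesis using elimD[OF el Y less.prems(1) WY(3)] WY(1) that by (metis Un_commute)
    qed
    have hY: "h \<in> supp Y - T" using h by (auto simp: supp_def)
    have "supp Z - T \<subseteq> supp Y - T - {h}" using Z less.prems(2) by (auto simp: supp_def)
    then have sub: "supp Z - T \<subset> supp Y - T" using hY by blast
    have "(fst Z \<inter> snd Y \<union> snd Z \<inter> fst Y) - T \<subseteq> (fst W \<inter> snd Y \<union> snd W \<inter> fst Y) - T - {h}"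
      using Z dY by auto
    moreover have "finite ((fst W \<inter> snd Y \<union> snd W \<inter> fst Y) - T)"
      using fY by (rule finite_subset[rotated]) (auto simp: supp_def)
    ultimately have "card ((fst Z \<inter> snd Y \<union> snd Z \<inter> fst Y) - T) < card ((fst W \<inter> snd Y \<union> snd W \<inter> fst Y) - T)"
      using h by (meson Diff_subset finite_subset card_mono card_Diff1_less le_less_trans)
    from less.hyps[OF this Z(1) sub] show ?thesis .
  qed
qed

lemma F_lemma:
  assumes good: "goodfam G" and indep: "\<forall>X\<in>G. \<not> supp X \<subseteq> T"
  shows "Y \<in> G \<Longrightarrow> snd Y \<subseteq> T \<Longrightarrow> \<exists>Z\<in>G. snd Z \<subseteq> T \<and> (\<forall>W\<in>G. \<not> (supp W - T \<subset> supp Z - T))"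
proof (induction "card (supp Y - T)" arbitrary: Y rule: less_induct)
  case less
  show ?case
  proof (cases "\<exists>W\<in>G. supp W - T \<subset> supp Y - T")
    case True
    then obtain W where "W \<in> G" "supp W - T \<subset> supp Y - T" by blast
    from conf_lemma[OF good indep less.prems(1) this] obtain Z where
      Z: "Z \<in> G" "supp Z - T \<subset> supp Y - T" "snd Z - T \<subseteq> snd Y" by blast
    have "finite (supp Y)" using good less.prems by (auto simp: goodfam_def)
    then have "card (supp Z - T) < card (supp Y - T)" using Z(2) by (meson finite_Diff psubset_card_mono)
    moreover have "snd Z \<subseteq> T" using Z(3) less.prems(2) by blast
    ultimately show ?thesis using less.hyps Z(1) by blast
  next
    case False
    then show ?thesis using less.prems by blast
  qed
qed

lemma good_delete:
  assumes g: "goodfam G" shows "goodfam (om_delete E G X)"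
proof -
  have el: "elimax G" and dj: "\<forall>X\<in>G. fst X \<inter> snd X = {} \<and> finite (supp X)" using g by (auto simp: goodfam_def)
  have "elimax (om_delete E G X)"
    unfolding elimax_def
  proof (intro ballI allI impI)
    fix U V e assume U: "U \<in> om_delete E G X" and V: "V \<in> om_delete E G X"
      and h: "U \<noteq> sneg V \<and> U \<noteq> V \<and> e \<in> fst U \<inter> snd V"
    have UG: "U \<in> G" "supp U \<subseteq> E - X" and VG: "V \<in> G" "supp V \<subseteq> E - X" using U V by (auto simp: om_delete_def)
    obtain Z where Z: "Z \<in> G" "fst Z \<subseteq> (fst U \<union> fst V) - {e}" "snd Z \<subseteq> (snd U \<union> snd V) - {e}"
      using elimD[OF el UG(1) VG(1)] h by blast
    have "supp Z \<subseteq> E - X" using Z UG(2) VG(2) unfolding supp_def by blast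
    then have "Z \<in> om_delete E G X" using Z(1) by (simp add: om_delete_def)
    then show "\<exists>Z\<in>om_delete E G X. fst Z \<subseteq> fst U \<union> fst V - {e} \<and> snd Z \<subseteq> snd U \<union> snd V - {e}"
      using Z by blast
  qed
  moreover have "\<forall>X\<in>om_delete E G X. fst X \<inter> snd X = {} \<and> finite (supp X)"
    using dj by (simp add: om_delete_def)
  ultimately show ?thesis by (simp add: goodfam_def)
qed

lemma good_reorient:
  assumes "goodfam G" shows "goodfam (reorient A G)"
proof -
  have el: "elimax G" and dj: "\<forall>X\<in>G. fst X \<inter> snd X = {} \<and> finite (supp X)" using assms by (auto simp: goodfam_def)
  have "elimax (reorient A G)"
    unfolding elimax_def
  proof (intro ballI allI impI)
    fix X' Y' e assume X': "X' \<in> reorient A G" and Y': "Y' \<in> reorient A G"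
      and h: "X' \<noteq> sneg Y' \<and> X' \<noteq> Y' \<and> e \<in> fst X' \<inter> snd Y'"
    obtain X Y where XY: "X \<in> G" "Y \<in> G" "X' = reor A X" "Y' = reor A Y" using X' Y' by (auto simp: reorient_def)
    have n1: "X \<noteq> Y" "X \<noteq> sneg Y" "Y \<noteq> sneg X" using h XY by (auto simp: sneg_reor)
    show "\<exists>Z\<in>reorient A G. fst Z \<subseteq> fst X' \<union> fst Y' - {e} \<and> snd Z \<subseteq> snd X' \<union> snd Y' - {e}"
    proof (cases "e \<in> A")
      case True
      then have "e \<in> fst Y" "e \<in> snd X" using h XY by (auto simp: reor_def)
      then obtain Z where Z: "Z \<in> G" "fst Z \<subseteq> (fst Y \<union> fst X) - {e}" "snd Z \<subseteq> (snd Y \<union> snd X) - {e}"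
        using elimD[OF el XY(2) XY(1) n1(3)] n1(1) by metis
      show ?thesis
        by (rule bexI[of _ "reor A Z"]) (use Z XY in \<open>auto simp: reor_def reorient_def\<close>)
    next
      case False
      then have "e \<in> fst X" "e \<in> snd Y" using h XY by (auto simp: reor_def)
      then obtain Z where Z: "Z \<in> G" "fst Z \<subseteq> (fst X \<union> fst Y) - {e}" "snd Z \<subseteq> (snd X \<union> snd Y) - {e}"
        using elimD[OF el XY(1) XY(2) n1(2) n1(1)] by metis
      show ?thesis
        by (rule bexI[of _ "reor A Z"]) (use Z XY in \<open>auto simp: reor_def reorient_def\<close>)
    qed
  qed
  moreover have "\<forall>X\<in>reorient A G. fst X \<inter> snd X = {} \<and> finite (supp X)"
    unfolding reorient_def
  proof
    fix X' assume "X' \<in> reor A ` G"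
    then obtain X where X: "X \<in> G" "X' = reor A X" by blast
    then have "fst X \<inter> snd X = {}" "finite (supp X)" using dj by auto
    then show "fst X' \<inter> snd X' = {} \<and> finite (supp X')" using X
      by (simp only: supp_reor) (auto simp: reor_def)
  qed
  ultimately show ?thesis by (simp add: goodfam_def)
qed

lemma reorient_delete: "reorient A (om_delete E C X) = om_delete E (reorient A C) X"
  by (auto simp: reorient_def om_delete_def)

lemma reor_restr: "reor A (fst Y - N, snd Y - N) = (fst (reor A Y) - N, snd (reor A Y) - N)"
  by (auto simp: reor_def)

lemma supp_restr[simp]: "supp (fst Y - N, snd Y - N) = supp Y - N"
  by (auto simp: supp_def)

lemma image_minimal:
  "reor A ` {Z\<in>S. \<forall>W\<in>S. \<not> supp W \<subset> supp Z} = {Z\<in>reor A ` S. \<forall>W\<in>reor A ` S. \<not> supp W \<subset> supp Z}"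
proof
  show "reor A ` {Z\<in>S. \<forall>W\<in>S. \<not> supp W \<subset> supp Z} \<subseteq> {Z\<in>reor A ` S. \<forall>W\<in>reor A ` S. \<not> supp W \<subset> supp Z}"
    by (simp add: image_subset_iff)
next
  show "{Z\<in>reor A ` S. \<forall>W\<in>reor A ` S. \<not> supp W \<subset> supp Z} \<subseteq> reor A ` {Z\<in>S. \<forall>W\<in>S. \<not> supp W \<subset> supp Z}"
  proof
    fix Z assume "Z \<in> {Z\<in>reor A ` S. \<forall>W\<in>reor A ` S. \<not> supp W \<subset> supp Z}"
    then obtain Z0 where "Z0 \<in> S" "Z = reor A Z0" "\<forall>W\<in>S. \<not> supp W \<subset> supp Z0" by auto
    then show "Z \<in> reor A ` {Z\<in>S. \<forall>W\<in>S. \<not> supp W \<subset> supp Z}" by blast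
  qed
qed

lemma reorient_contract: "reorient A (om_contract C N) = om_contract (reorient A C) N"
proof -
  define S where "S = {(fst Y - N, snd Y - N) | Y. Y \<in> C \<and> supp Y - N \<noteq> {}}"
  define S' where "S' = {(fst Y - N, snd Y - N) | Y. Y \<in> reorient A C \<and> supp Y - N \<noteq> {}}"
  have SS: "S' = reor A ` S"
  proof
    show "S' \<subseteq> reor A ` S"
    proof
      fix z assume "z \<in> S'"
      then obtain Y where Y: "z = (fst Y - N, snd Y - N)" "Y \<in> reorient A C" "supp Y - N \<noteq> {}"
        unfolding S'_def by blast
      then obtain Y0 where Y0: "Y0 \<in> C" "Y = reor A Y0" unfolding reorient_def by blast
      have "z = reor A (fst Y0 - N, snd Y0 - N)" using Y(1) Y0(2) by (simp add: reor_restr)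
      moreover have "supp Y0 - N \<noteq> {}" using Y(3) Y0(2) by simp
      then have "(fst Y0 - N, snd Y0 - N) \<in> S" unfolding S_def using Y0(1) by blast
      ultimately show "z \<in> reor A ` S" by blast
    qed
  next
    show "reor A ` S \<subseteq> S'"
    proof
      fix z assume "z \<in> reor A ` S"
      then obtain Y0 where Y0: "z = reor A (fst Y0 - N, snd Y0 - N)" "Y0 \<in> C" "supp Y0 - N \<noteq> {}"
        unfolding S_def by blast
      have "z = (fst (reor A Y0) - N, snd (reor A Y0) - N)" using Y0(1) by (simp add: reor_restr)
      moreover have "reor A Y0 \<in> reorient A C" using Y0(2) by (simp add: reorient_def)
      moreover have "supp (reor A Y0) - N \<noteq> {}" using Y0(3) by simp
      ultimately show "z \<in> S'" unfolding S'_def by blast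
    qed
  qed
  have "reorient A (om_contract C N) = reor A ` {Z\<in>S. \<forall>W\<in>S. \<not> supp W \<subset> supp Z}"
    by (simp only: reorient_def om_contract_def S_def Let_def)
  also have "\<dots> = {Z\<in>S'. \<forall>W\<in>S'. \<not> supp W \<subset> supp Z}"
    unfolding SS by (rule image_minimal)
  finally show ?thesis by (simp only: om_contract_def S'_def Let_def)
qed

lemma char:
  assumes good: "goodfam G" and indep: "\<forall>Y\<in>G. \<not> supp Y \<subseteq> N"
  shows "acyclic_om (om_contract (om_delete E G X) N) \<longleftrightarrow> \<not>(\<exists>Y\<in>G. supp Y \<subseteq> E - X \<and> snd Y \<subseteq> N)"
proof -
  define D where "D = om_delete E G X"
  define S where "S = {(fst Y - N, snd Y - N) | Y. Y \<in> D \<and> supp Y - N \<noteq> {}}"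
  have con: "om_contract D N = {Z\<in>S. \<forall>W\<in>S. \<not> supp W \<subset> supp Z}"
    by (simp add: om_contract_def S_def Let_def)
  have g2: "goodfam D" unfolding D_def by (rule good_delete[OF good])
  have i2: "\<forall>Y\<in>D. \<not> supp Y \<subseteq> N" using indep by (auto simp: om_delete_def D_def)
  show ?thesis
  proof
    assume ac: "acyclic_om (om_contract (om_delete E G X) N)"
    show "\<not>(\<exists>Y\<in>G. supp Y \<subseteq> E - X \<and> snd Y \<subseteq> N)"
    proof
      assume "\<exists>Y\<in>G. supp Y \<subseteq> E - X \<and> snd Y \<subseteq> N"
      then obtain Y where Y: "Y \<in> D" "snd Y \<subseteq> N" by (auto simp: om_delete_def D_def)
      obtain Z where Z: "Z \<in> D" "snd Z \<subseteq> N"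
        "\<forall>W\<in>D. \<not> (supp W - N \<subset> supp Z - N)"
        using F_lemma[OF g2 i2 Y] by blast
      have ZS: "(fst Z - N, snd Z - N) \<in> S" unfolding S_def using Z(1) i2 by blast
      have "\<forall>W\<in>S. \<not> supp W \<subset> supp (fst Z - N, snd Z - N)"
      proof
        fix W assume "W \<in> S"
        then obtain Y' where "W = (fst Y' - N, snd Y' - N)" "Y' \<in> D" unfolding S_def by blast
        then show "\<not> supp W \<subset> supp (fst Z - N, snd Z - N)" using Z(3) by simp
      qed
      then have "(fst Z - N, snd Z - N) \<in> om_contract D N" using ZS con by blast
      moreover have "snd (fst Z - N, snd Z - N) = {}" using Z(2) by simp
      ultimately show False using ac unfolding acyclic_om_def D_def by blast
    qed
  next
    assume h: "\<not>(\<exists>Y\<in>G. supp Y \<subseteq> E - X \<and> snd Y \<subseteq> N)"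
    show "acyclic_om (om_contract (om_delete E G X) N)"
      unfolding acyclic_om_def
    proof
      assume "\<exists>Z\<in>om_contract (om_delete E G X) N. snd Z = {}"
      then obtain Z where Z: "Z \<in> S" "snd Z = {}" using con D_def by blast
      then obtain Y where Y: "Y \<in> D" "Z = (fst Y - N, snd Y - N)" unfolding S_def by blast
      then have "snd Y \<subseteq> N" using Z(2) by auto
      then show False using Y(1) using h unfolding D_def om_delete_def by blast
    qed
  qed
qed

definition bad :: "'a set \<Rightarrow> 'a signed set \<Rightarrow> 'a set \<Rightarrow> 'a set \<Rightarrow> 'a set \<Rightarrow> bool" where
  "bad E C A N X \<longleftrightarrow> (\<exists>Y\<in>C. supp Y \<subseteq> E - X \<and> snd (reor A Y) \<subseteq> N)"

lemma om_good: assumes om: "oriented_matroid E C" shows "goodfam C"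
proof -
  have "elimax C" using om unfolding oriented_matroid_def elimax_def by blast
  moreover have "\<forall>X\<in>C. fst X \<inter> snd X = {} \<and> finite (supp X)"
  proof
    fix X assume "X \<in> C"
    then have "fst X \<inter> snd X = {}" "supp X \<subseteq> E" "finite E"
      using om unfolding oriented_matroid_def signed_subset_def supp_def by auto
    then show "fst X \<inter> snd X = {} \<and> finite (supp X)" using finite_subset by blast
  qed
  ultimately show ?thesis by (simp add: goodfam_def)
qed

lemma om_supp: "oriented_matroid E C \<Longrightarrow> X \<in> C \<Longrightarrow> supp X \<subseteq> E"
  unfolding oriented_matroid_def signed_subset_def supp_def by auto

lemma om_disj: "oriented_matroid E C \<Longrightarrow> X \<in> C \<Longrightarrow> fst X \<inter> snd X = {}"
  unfolding oriented_matroid_def signed_subset_def by auto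

lemma om_neg: "oriented_matroid E C \<Longrightarrow> X \<in> C \<Longrightarrow> sneg X \<in> C"
  unfolding oriented_matroid_def by auto

lemma om_ne: "oriented_matroid E C \<Longrightarrow> X \<in> C \<Longrightarrow> supp X \<noteq> {}"
  unfolding oriented_matroid_def supp_def by (cases X) auto

lemma NBC_indep: "N \<in> NBC E C \<Longrightarrow> \<forall>Y\<in>C. \<not> supp Y \<subseteq> N"
  unfolding NBC_def by blast

lemma reor_ins: "e \<notin> A \<Longrightarrow> reor (insert e A) X = reor {e} (reor A X)"
  by (auto simp: reor_def)

lemma bad_reorient: "(\<exists>Y\<in>reorient A C. supp Y \<subseteq> E - X \<and> snd Y \<subseteq> N) \<longleftrightarrow> bad E C A N X"
  unfolding reorient_def bad_def
proof
  assume "\<exists>Y\<in>reor A ` C. supp Y \<subseteq> E - X \<and> snd Y \<subseteq> N"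
  then obtain Y where "Y \<in> C" "supp (reor A Y) \<subseteq> E - X" "snd (reor A Y) \<subseteq> N" by blast
  then show "\<exists>Y\<in>C. supp Y \<subseteq> E - X \<and> snd (reor A Y) \<subseteq> N" by (metis supp_reor)
next
  assume "\<exists>Y\<in>C. supp Y \<subseteq> E - X \<and> snd (reor A Y) \<subseteq> N"
  then obtain Y where "Y \<in> C" "supp (reor A Y) \<subseteq> E - X" "snd (reor A Y) \<subseteq> N" by (metis supp_reor)
  then show "\<exists>Y\<in>reor A ` C. supp Y \<subseteq> E - X \<and> snd Y \<subseteq> N" by blast
qed

lemma Mk_char:
  assumes om: "oriented_matroid E C" and ind: "\<forall>Y\<in>C. \<not> supp Y \<subseteq> N"
  shows "acyclic_om (Mk E C k N A) \<longleftrightarrow> \<not> bad E C A N (Eprefix E k - N)"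
proof -
  have g: "goodfam (reorient A C)" by (rule good_reorient[OF om_good[OF om]])
  have i: "\<forall>Y\<in>reorient A C. \<not> supp Y \<subseteq> N" using ind unfolding reorient_def by (metis imageE supp_reor)
  have "Mk E C k N A = om_contract (om_delete E (reorient A C) (Eprefix E k - N)) N"
    by (simp only: Mk_def reorient_contract reorient_delete)
  then show ?thesis using char[OF g i, of E "Eprefix E k - N"] bad_reorient by metis
qed

lemma reorient_ins: "e \<notin> A \<Longrightarrow> reorient {e} (reorient A S) = reorient (insert e A) S"
  unfolding reorient_def image_comp by (rule image_cong) (simp_all add: reor_ins[symmetric])

lemma Mk_flip: "e \<notin> A \<Longrightarrow> reorient {e} (Mk E C k N A) = Mk E C k N (insert e A)"
  unfolding Mk_def by (rule reorient_ins)

lemma Nset_mem: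
  assumes om: "oriented_matroid E C"
  shows "(N, A) \<in> Nset E C k \<longleftrightarrow> N \<subseteq> Eprefix E k \<and> A \<subseteq> E - Eprefix E k \<and> N \<in> NBC E C \<and>
                         \<not> bad E C A N (Eprefix E k - N)"
proof (cases "N \<in> NBC E C")
  case True
  then show ?thesis unfolding Nset_def using Mk_char[OF om NBC_indep[OF True]] by simp
next
  case False
  then show ?thesis unfolding Nset_def by simp
qed

lemma psi_char:
  assumes om: "oriented_matroid E C" and N: "N \<in> NBC E C"
  shows "psi E C k (N, A) = (if elt E k \<notin> A then
      (if \<not> bad E C (insert (elt E k) A) N (Eprefix E (k - 1) - N) then (insert (elt E k) N, A) else (N, A))
      else (N, A - {elt E k}))"
proof (cases "elt E k \<in> A")
  case True
  then show ?thesis by (simp add: psi_def Let_def)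
next
  case False
  have "acyclic_om (reorient {elt E k} (Mk E C (k-1) N A)) \<longleftrightarrow> \<not> bad E C (insert (elt E k) A) N (Eprefix E (k-1) - N)"
    using Mk_flip[OF False] Mk_char[OF om NBC_indep[OF N]] by simp
  then show ?thesis using False by (simp add: psi_def Let_def)
qed

lemma pre_facts:
  fixes E :: "'a::linorder set"
  assumes fin: "finite E" and k: "1 \<le> k" "k \<le> card E"
  shows "Eprefix E k = insert (elt E k) (Eprefix E (k-1))" "elt E k \<notin> Eprefix E (k-1)"
    "elt E k \<in> E" "Eprefix E (k-1) \<subseteq> E" "\<forall>x\<in>Eprefix E (k-1). x < elt E k"
    "\<forall>x\<in>E - Eprefix E k. elt E k < x"
proof -
  define L where "L = sorted_list_of_set E"
  have len: "length L = card E" and dist: "distinct L" and srt: "sorted_wrt (<) L"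
    and setL: "set L = E"
    using fin by (auto simp: L_def)
  have kk: "k = Suc (k - 1)" "k - 1 < length L" using k len by auto
  have tk: "take k L = take (k-1) L @ [L ! (k-1)]"
    by (metis kk(1) take_Suc_conv_app_nth[OF kk(2)])
  show "Eprefix E k = insert (elt E k) (Eprefix E (k-1))"
    unfolding Eprefix_def elt_def L_def[symmetric] tk by auto
  show "elt E k \<notin> Eprefix E (k-1)"
  proof
    assume "elt E k \<in> Eprefix E (k-1)"
    then obtain i where i: "i < length (take (k-1) L)" "L ! (k-1) = take (k-1) L ! i"
      unfolding Eprefix_def elt_def L_def[symmetric] by (metis in_set_conv_nth)
    then have "i < k - 1" "L ! (k-1) = L ! i" by auto
    then show False using dist kk(2) nth_eq_iff_index_eq by fastforce
  qed
  show "elt E k \<in> E" unfolding elt_def L_def[symmetric] using kk(2) setL by auto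
  show "Eprefix E (k-1) \<subseteq> E" unfolding Eprefix_def L_def[symmetric] using setL
    by (meson set_take_subset)
  show "\<forall>x\<in>Eprefix E (k-1). x < elt E k"
  proof
    fix x assume "x \<in> Eprefix E (k-1)"
    then obtain i where i: "i < length (take (k-1) L)" "x = take (k-1) L ! i"
      unfolding Eprefix_def L_def[symmetric] by (metis in_set_conv_nth)
    then have "i < k - 1" "x = L ! i" by auto
    then show "x < elt E k" unfolding elt_def L_def[symmetric]
      using srt kk(2) by (simp add: sorted_wrt_nth_less)
  qed
  show "\<forall>x\<in>E - Eprefix E k. elt E k < x"
  proof
    fix x assume x: "x \<in> E - Eprefix E k"
    then obtain j where j: "j < length L" "x = L ! j" using setL by (metis DiffD1 in_set_conv_nth)
    have "\<not> j < k"
    proof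
      assume "j < k"
      then have "x \<in> set (take k L)" using j by (metis in_set_conv_nth length_take min_less_iff_conj nth_take)
      then show False using x unfolding Eprefix_def L_def[symmetric] by auto
    qed
    then show "elt E k < x" unfolding elt_def L_def[symmetric]
      using srt j kk by (simp add: sorted_wrt_nth_less)
  qed
qed

lemma Eprefix_0: "Eprefix E 0 = {}" by (simp add: Eprefix_def)
lemma Eprefix_card: "finite E \<Longrightarrow> Eprefix E (card E) = E"
  by (simp add: Eprefix_def)

lemma bad_mono_X: "X \<subseteq> X' \<Longrightarrow> \<not> bad E C A N X \<Longrightarrow> \<not> bad E C A N X'"
  unfolding bad_def by blast

lemma bad_mono_N: "N \<subseteq> N' \<Longrightarrow> \<not> bad E C A N' X \<Longrightarrow> \<not> bad E C A N X"
  unfolding bad_def by blast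

lemma L_c:
  assumes "e \<in> A" "e \<in> X" "\<not> bad E C A N X" shows "\<not> bad E C (A - {e}) N X"
proof
  assume "bad E C (A - {e}) N X"
  then obtain Y where Y: "Y \<in> C" "supp Y \<subseteq> E - X" "snd (reor (A - {e}) Y) \<subseteq> N"
    unfolding bad_def by blast
  have "e \<notin> supp Y" using Y(2) assms(2) by auto
  then have "reor (A - {e}) Y = reor A Y" by (auto simp: reor_def supp_def)
  then show False using Y assms(3) unfolding bad_def by auto
qed

lemma L_a2:
  assumes om: "oriented_matroid E C" and "e \<notin> A" "\<not> bad E C A N X" "\<not> bad E C (insert e A) N X"
  shows "\<not> bad E C A (insert e N) X"
  unfolding bad_def
proof clarify
  fix Y assume Y: "Y \<in> C" "supp Y \<subseteq> E - X" "snd (reor A Y) \<subseteq> insert e N"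
  have dj: "fst Y \<inter> snd Y = {}" using om_disj[OF om Y(1)] .
  show False
  proof (cases "e \<in> snd (reor A Y)")
    case True
    then have "snd (reor (insert e A) Y) \<subseteq> N" using Y(3) dj assms(2) by (auto simp: reor_def)
    then show ?thesis using assms(4) Y unfolding bad_def by blast
  next
    case False
    then have "snd (reor A Y) \<subseteq> N" using Y(3) by auto
    then show ?thesis using assms(3) Y unfolding bad_def by blast
  qed
qed

lemma L_s2:
  assumes eN: "e \<in> N'" and nb: "\<not> bad E C A N' X" shows "\<not> bad E C (insert e A) (N' - {e}) X"
proof
  assume "bad E C (insert e A) (N' - {e}) X"
  then obtain Y where Y: "Y \<in> C" "supp Y \<subseteq> E - X" "snd (reor (insert e A) Y) \<subseteq> N' - {e}"
    unfolding bad_def by blast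
  have "snd (reor A Y) \<subseteq> snd (reor (insert e A) Y) \<union> {e}" by (auto simp: reor_def)
  then have "snd (reor A Y) \<subseteq> N'" using Y(3) eN by auto
  then show False using Y nb unfolding bad_def by blast
qed

lemma finite_supp: assumes "oriented_matroid E C" "X \<in> C" shows "finite (supp X)"
proof -
  have "supp X \<subseteq> E" using om_supp[OF assms] .
  moreover have "finite E" using assms(1) unfolding oriented_matroid_def by simp
  ultimately show ?thesis using finite_subset by blast
qed

lemma L_a1:
  fixes E :: "'a::linorder set"
  assumes om: "oriented_matroid E C" and N: "N \<in> NBC E C" "N \<subseteq> P"
    and eA: "e \<notin> A" and lt: "\<forall>x\<in>P. x < e" and eE: "e \<in> E"
    and b1: "\<not> bad E C A N (P - N)" and b2: "\<not> bad E C (insert e A) N (P - N)"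
  shows "insert e N \<in> NBC E C"
  unfolding NBC_def
proof (intro CollectI conjI ballI notI)
  show "insert e N \<subseteq> E" using N eE by (auto simp: NBC_def)
next
  fix X assume X: "X \<in> C" and sub: "supp X - {Max (supp X)} \<subseteq> insert e N"
  define f where "f = Max (supp X)"
  have fin: "finite (supp X)" using finite_supp[OF om X] .
  have ne: "supp X \<noteq> {}" using om_ne[OF om X] .
  have fX: "f \<in> supp X" using fin ne by (simp add: f_def)
  have nb: "\<not> (supp X - {f} \<subseteq> N)" using N(1) X by (auto simp: NBC_def f_def)
  have eX: "e \<in> supp X" "e \<noteq> f" using nb sub by (auto simp: f_def)
  have "e \<le> f" using fin eX by (simp add: f_def)
  then have ef: "e < f" using eX by auto
  have fP: "f \<notin> P" using lt ef by auto
  have suppX: "supp X \<subseteq> insert f (insert e N)" using sub by (auto simp: f_def)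
  have XE: "supp X \<subseteq> E - (P - N)" using suppX fP om_supp[OF om X] lt by auto
  define Y where "Y = reor A X"
  have dj: "fst Y \<inter> snd Y = {}" using om_disj[OF om X] by (auto simp: Y_def reor_def)
  have sY: "supp Y \<subseteq> insert f (insert e N)" using suppX by (simp add: Y_def)
  have "e \<in> supp Y" "f \<in> supp Y" using eX fX by (simp_all add: Y_def)
  then have eY: "e \<in> fst Y \<or> e \<in> snd Y" and fY: "f \<in> fst Y \<or> f \<in> snd Y"
    by (auto simp: supp_def)
  have nX: "sneg X \<in> C" using om_neg[OF om X] .
  have r1: "snd (reor A (sneg X)) = fst Y" by (simp add: Y_def reor_def sneg_def)
  have r2: "reor (insert e A) X = reor {e} Y" unfolding Y_def by (rule reor_ins[OF eA])
  have r3: "snd (reor (insert e A) (sneg X)) = fst (reor {e} Y)"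
    using r2 by (metis prod.sel(2) sneg_def sneg_reor)
  have XE': "supp (sneg X) \<subseteq> E - (P - N)" using XE by simp
  consider "e \<in> fst Y" "f \<in> fst Y" | "e \<in> snd Y" "f \<in> snd Y" | "e \<in> fst Y" "f \<in> snd Y"
    | "e \<in> snd Y" "f \<in> fst Y" using eY fY by blast
  then show False
  proof cases
    case 1
    then have "snd (reor A X) \<subseteq> N" using sY dj by (auto simp: Y_def[symmetric] supp_def)
    then show False using b1 X XE unfolding bad_def by blast
  next
    case 2
    then have "snd (reor A (sneg X)) \<subseteq> N" using sY dj r1 by (auto simp: supp_def)
    then show False using b1 nX XE' unfolding bad_def by blast
  next
    case 3
    then have "snd (reor (insert e A) (sneg X)) \<subseteq> N" using sY dj r3 by (auto simp: supp_def reor_def)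
    then show False using b2 nX XE' unfolding bad_def by blast
  next
    case 4
    then have "snd (reor (insert e A) X) \<subseteq> N" using sY dj r2 by (auto simp: supp_def reor_def)
    then show False using b2 X XE unfolding bad_def by blast
  qed
qed

lemma L_s:
  fixes E :: "'a::linorder set"
  assumes om: "oriented_matroid E C" and N: "N \<in> NBC E C" "N \<subseteq> P"
    and eA: "e \<notin> A" and lt: "\<forall>x\<in>P. x < e" and eP: "e \<notin> P"
    and b0: "\<not> bad E C A N (insert e (P - N))" and b1: "bad E C A N (P - N)"
  shows "\<not> bad E C (insert e A) N (P - N)"
proof
  assume b2: "bad E C (insert e A) N (P - N)"
  obtain Y1 where Y1: "Y1 \<in> C" "supp Y1 \<subseteq> E - (P - N)" "snd (reor A Y1) \<subseteq> N"
    using b1 unfolding bad_def by blast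
  obtain Y2 where Y2: "Y2 \<in> C" "supp Y2 \<subseteq> E - (P - N)" "snd (reor (insert e A) Y2) \<subseteq> N"
    using b2 unfolding bad_def by blast
  have eN: "e \<notin> N" using N eP by auto
  have e1: "e \<in> supp Y1" using b0 Y1 unfolding bad_def by blast
  define U1 where "U1 = reor A Y1"
  define U2 where "U2 = reor A Y2"
  have d1: "fst U1 \<inter> snd U1 = {}" using om_disj[OF om Y1(1)] by (auto simp: U1_def reor_def)
  have d2: "fst U2 \<inter> snd U2 = {}" using om_disj[OF om Y2(1)] by (auto simp: U2_def reor_def)
  have "e \<in> supp U1" using e1 by (simp add: U1_def)
  then have eU1: "e \<in> fst U1" using Y1(3) eN by (auto simp: U1_def[symmetric] supp_def)
  have "snd (reor {e} U2) \<subseteq> N" using Y2(3) unfolding U2_def reor_ins[OF eA, symmetric] .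
  then have s2: "snd U2 - {e} \<subseteq> N" "e \<notin> fst U2" using eN by (auto simp: reor_def)
  have e2: "e \<in> supp Y2"
  proof (rule ccontr)
    assume "e \<notin> supp Y2"
    then have "snd (reor A Y2) \<subseteq> N" using Y2(3) by (auto simp: reor_def supp_def)
    then show False using b0 Y2 \<open>e \<notin> supp Y2\<close> unfolding bad_def by blast
  qed
  then have "e \<in> supp U2" by (simp add: U2_def)
  then have eU2: "e \<in> snd U2" using s2(2) by (auto simp: supp_def)
  show False
  proof (cases "supp Y1 \<subseteq> insert e N")
    case True
    have fin: "finite (supp Y1)" using finite_supp[OF om Y1(1)] .
    have "Max (supp Y1) = e"
      using True e1 fin lt N(2) by (intro Max_eqI) (auto, fastforce)
    then show False using True N(1) Y1(1) unfolding NBC_def by blast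
  next
    case False
    then obtain x where x: "x \<in> supp Y1" "x \<notin> insert e N" by blast
    have "x \<in> supp U1" using x(1) by (simp add: U1_def)
    then have xU1: "x \<in> fst U1" using x(2) Y1(3) by (auto simp: U1_def[symmetric] supp_def)
    have "x \<notin> snd U2" using s2 x by auto
    then have n1: "U1 \<noteq> sneg U2" using xU1 by (auto simp: sneg_def)
    have n2: "U1 \<noteq> U2" using eU1 eU2 d2 by auto
    have el: "elimax (reorient A C)" using good_reorient[OF om_good[OF om]] by (simp add: goodfam_def)
    have U1C: "U1 \<in> reorient A C" and U2C: "U2 \<in> reorient A C" using Y1 Y2 by (auto simp: U1_def U2_def reorient_def)
    obtain Z where Z: "Z \<in> reorient A C" "fst Z \<subseteq> fst U1 \<union> fst U2 - {e}" "snd Z \<subseteq> snd U1 \<union> snd U2 - {e}"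
      using elimD[OF el U1C U2C n1 n2 eU1 eU2] by blast
    obtain Y3 where Y3: "Y3 \<in> C" "Z = reor A Y3" using Z(1) by (auto simp: reorient_def)
    have "snd (reor A Y3) \<subseteq> N" using Z(3) Y3(2) Y1(3) s2 by (auto simp: U1_def)
    moreover have "supp Y3 \<subseteq> E - insert e (P - N)"
    proof -
      have "supp Z \<subseteq> supp U1 \<union> supp U2 - {e}" using Z by (auto simp: supp_def)
      then show ?thesis using Y3 Y1(2) Y2(2) by (auto simp: U1_def U2_def)
    qed
    ultimately show False using b0 Y3(1) unfolding bad_def by blast
  qed
qed

lemma NBC_sub: "N \<in> NBC E C \<Longrightarrow> M \<subseteq> N \<Longrightarrow> M \<in> NBC E C"
  unfolding NBC_def by blast

lemma step_bij:
  fixes E :: "'a::linorder set"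
  assumes om: "oriented_matroid E C" and k: "1 \<le> k" "k \<le> card E"
  shows "bij_betw (psi E C k) (Nset E C (k-1)) (Nset E C k)"
proof -
  have fin: "finite E" using om unfolding oriented_matroid_def by simp
  define e where "e = elt E k"
  define P where "P = Eprefix E (k-1)"
  note pf = pre_facts[OF fin k, folded e_def P_def]
  have P1: "Eprefix E k = insert e P" using pf(1) .
  have eP: "e \<notin> P" and eE: "e \<in> E" and PE: "P \<subseteq> E" and lt: "\<forall>x\<in>P. x < e"
    using pf by auto
  have mem0: "\<And>N A. (N, A) \<in> Nset E C (k-1) \<longleftrightarrow> N \<subseteq> P \<and> A \<subseteq> E - P \<and> N \<in> NBC E C \<and> \<not> bad E C A N (P - N)"
    using Nset_mem[OF om] P_def by blast
  have mem1: "\<And>N A. (N, A) \<in> Nset E C k \<longleftrightarrow> N \<subseteq> insert e P \<and> A \<subseteq> E - insert e P \<and> N \<in> NBC E C \<and>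
      \<not> bad E C A N (insert e P - N)"
    using Nset_mem[OF om, of _ _ k] P1 by simp
  have ps: "\<And>N A. N \<in> NBC E C \<Longrightarrow> psi E C k (N, A) = (if e \<notin> A then
      (if \<not> bad E C (insert e A) N (P - N) then (insert e N, A) else (N, A)) else (N, A - {e}))"
    using psi_char[OF om] e_def P_def by blast
  have into: "psi E C k p \<in> Nset E C k" if p: "p \<in> Nset E C (k-1)" for p
  proof -
    obtain N A where pNA: "p = (N, A)" by (cases p)
    have h: "N \<subseteq> P" "A \<subseteq> E - P" "N \<in> NBC E C" "\<not> bad E C A N (P - N)" using p pNA mem0 by auto
    have eN: "e \<notin> N" using h(1) eP by blast
    have Pdiff: "insert e P - insert e N = P - N" using eP by blast
    have mono: "\<not> bad E C A N (insert e P - N)" by (rule bad_mono_X[OF _ h(4)]) blast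
    show ?thesis
    proof (cases "e \<in> A")
      case True
      have "\<not> bad E C (A - {e}) N (insert e P - N)" by (rule L_c[OF True _ mono]) (use eN in blast)
      moreover have "A - {e} \<subseteq> E - insert e P" using h(2) by blast
      ultimately show ?thesis using ps[OF h(3)] True pNA mem1 h by auto
    next
      case False
      show ?thesis
      proof (cases "bad E C (insert e A) N (P - N)")
        case True
        then show ?thesis using ps[OF h(3)] False pNA mem1 h mono by auto
      next
        case nb: False
        have "insert e N \<in> NBC E C" by (rule L_a1[OF om h(3) h(1) False lt eE h(4) nb])
        moreover have "\<not> bad E C A (insert e N) (insert e P - insert e N)"
          unfolding Pdiff by (rule L_a2[OF om False h(4) nb])
        moreover have "A \<subseteq> E - insert e P" using h(2) False by blast
        ultimately show ?thesis using ps[OF h(3)] False nb pNA mem1 h by auto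
      qed
    qed
  qed
  have onto: "q \<in> psi E C k ` Nset E C (k-1)" if q: "q \<in> Nset E C k" for q
  proof -
    obtain N' A' where qNA: "q = (N', A')" by (cases q)
    have h: "N' \<subseteq> insert e P" "A' \<subseteq> E - insert e P" "N' \<in> NBC E C" "\<not> bad E C A' N' (insert e P - N')"
      using q qNA mem1 by auto
    have eA: "e \<notin> A'" using h(2) by blast
    show ?thesis
    proof (cases "e \<in> N'")
      case True
      define N where "N = N' - {e}"
      have NP: "N \<subseteq> P" using h(1) N_def by blast
      have X: "P - N = insert e P - N'" using True eP N_def by blast
      have NB: "N \<in> NBC E C" using NBC_sub[OF h(3)] N_def by blast
      have b1: "\<not> bad E C A' N (P - N)" unfolding X by (rule bad_mono_N[OF _ h(4)]) (simp add: N_def)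
      have b2': "\<not> bad E C (insert e A') N (insert e P - N')" unfolding N_def by (rule L_s2[OF True h(4)])
      have b2: "\<not> bad E C (insert e A') N (P - N)" using b2' X by simp
      have mem: "(N, A') \<in> Nset E C (k-1)" using mem0 NP h(2) NB b1 by blast
      have "psi E C k (N, A') = (N', A')" using ps[OF NB] eA b2 True N_def by auto
      then show ?thesis using mem qNA by (metis image_eqI)
    next
      case False
      have NP: "N' \<subseteq> P" using h(1) False by blast
      have AP: "A' \<subseteq> E - P" and AP2: "insert e A' \<subseteq> E - P" using h(2) eE eP by auto
      have X: "insert e P - N' = insert e (P - N')" using False by blast
      show ?thesis
      proof (cases "bad E C (insert e A') N' (P - N')")
        case True
        have b1: "\<not> bad E C A' N' (P - N')"
        proof
          assume "bad E C A' N' (P - N')"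
          from L_s[OF om h(3) NP eA lt eP _ this] h(4) X True show False by simp
        qed
        have mem: "(N', A') \<in> Nset E C (k-1)" using mem0 NP AP h(3) b1 by blast
        have "psi E C k (N', A') = (N', A')" using ps[OF h(3)] eA True by auto
        then show ?thesis using mem qNA by (metis image_eqI)
      next
        case nb: False
        have mem: "(N', insert e A') \<in> Nset E C (k-1)" using mem0 NP AP2 h(3) nb by blast
        have "psi E C k (N', insert e A') = (N', A')" using ps[OF h(3)] eA by auto
        then show ?thesis using mem qNA by (metis image_eqI)
      qed
    qed
  qed
  have inj: "inj_on (psi E C k) (Nset E C (k-1))"
  proof (rule inj_onI)
    fix p1 p2 assume p1: "p1 \<in> Nset E C (k-1)" and p2: "p2 \<in> Nset E C (k-1)"
      and eq: "psi E C k p1 = psi E C k p2"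
    obtain N1 A1 where q1: "p1 = (N1, A1)" by (cases p1)
    obtain N2 A2 where q2: "p2 = (N2, A2)" by (cases p2)
    have h1: "N1 \<subseteq> P" "A1 \<subseteq> E - P" "N1 \<in> NBC E C" "\<not> bad E C A1 N1 (P - N1)" using p1 q1 mem0 by auto
    have h2: "N2 \<subseteq> P" "A2 \<subseteq> E - P" "N2 \<in> NBC E C" "\<not> bad E C A2 N2 (P - N2)" using p2 q2 mem0 by auto
    have e1: "e \<notin> N1" and e2: "e \<notin> N2" using h1(1) h2(1) eP by auto
    have eq': "(if e \<notin> A1 then (if \<not> bad E C (insert e A1) N1 (P - N1) then (insert e N1, A1) else (N1, A1)) else (N1, A1 - {e}))
      = (if e \<notin> A2 then (if \<not> bad E C (insert e A2) N2 (P - N2) then (insert e N2, A2) else (N2, A2)) else (N2, A2 - {e}))"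
      using eq q1 q2 ps[OF h1(3)] ps[OF h2(3)] by simp
    have ins: "\<And>M1 M2. e \<notin> M1 \<Longrightarrow> e \<notin> M2 \<Longrightarrow> insert e M1 = insert e M2 \<Longrightarrow> M1 = M2"
      by (metis Diff_insert_absorb)
    have rm: "\<And>B1 B2. e \<in> B1 \<Longrightarrow> e \<in> B2 \<Longrightarrow> B1 - {e} = B2 - {e} \<Longrightarrow> B1 = B2"
      by (metis insert_Diff)
    have "N1 = N2 \<and> A1 = A2"
    proof (cases "e \<in> A1"; cases "e \<in> A2")
      assume a: "e \<in> A1" "e \<in> A2"
      then show ?thesis using eq' rm by auto
    next
      assume a: "e \<in> A1" "e \<notin> A2"
      then have A1: "A1 = insert e A2" using eq' e2 by (auto split: if_splits)
      then have "N1 = N2" using eq' a e1 e2 by (auto split: if_splits)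
      then show ?thesis using eq' a A1 h1(4) e2 by (auto split: if_splits)
    next
      assume a: "e \<notin> A1" "e \<in> A2"
      then have A2: "A2 = insert e A1" using eq' e1 by (auto split: if_splits)
      then have "N1 = N2" using eq' a e1 e2 by (auto split: if_splits)
      then show ?thesis using eq' a A2 h2(4) e1 by (auto split: if_splits)
    next
      assume a: "e \<notin> A1" "e \<notin> A2"
      then show ?thesis using eq' e1 e2 ins by (auto split: if_splits)
    qed
    then show "p1 = p2" using q1 q2 by simp
  qed
  show ?thesis unfolding bij_betw_def using inj into onto by blast
qed

lemma comp_bij:
  fixes E :: "'a::linorder set"
  assumes om: "oriented_matroid E C"
  shows "k \<le> card E \<Longrightarrow> bij_betw (psi_comp E C k) (Nset E C 0) (Nset E C k)"
proof (induction k)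
  case 0
  then show ?case by (simp add: bij_betw_def inj_on_def)
next
  case (Suc k)
  have "bij_betw (psi E C (Suc k)) (Nset E C (Suc k - 1)) (Nset E C (Suc k))"
    by (rule step_bij[OF om]) (use Suc.prems in auto)
  then have "bij_betw (psi E C (Suc k)) (Nset E C k) (Nset E C (Suc k))" by simp
  from bij_betw_trans[OF Suc.IH[OF Suc_leD[OF Suc.prems]] this] show ?case by (simp add: comp_def)
qed

lemma empty_NBC:
  assumes om: "oriented_matroid E C" and ll: "loopless C"
  shows "{} \<in> NBC E C"
  unfolding NBC_def
proof (intro CollectI conjI ballI notI)
  fix X assume X: "X \<in> C" "supp X - {Max (supp X)} \<subseteq> {}"
  have ne: "supp X \<noteq> {}" using om_ne[OF om X(1)] .
  have "supp X = {Max (supp X)}" using X(2) ne by blast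
  then show False using ll X(1) unfolding loopless_def by blast
qed simp

lemma Nset0:
  fixes E :: "'a::linorder set"
  assumes om: "oriented_matroid E C" and ll: "loopless C"
  shows "Nset E C 0 = (\<lambda>A. ({}, A)) ` acyc_reorientations E C"
proof (rule set_eqI)
  fix p :: "'a set \<times> 'a set"
  obtain N A where p: "p = (N, A)" by (cases p)
  have "bad E C A {} {} \<longleftrightarrow> \<not> acyclic_om (reorient A C)"
  proof
    assume "bad E C A {} {}"
    then obtain Y where "Y \<in> C" "snd (reor A Y) = {}" unfolding bad_def by blast
    then show "\<not> acyclic_om (reorient A C)" unfolding acyclic_om_def reorient_def by blast
  next
    assume "\<not> acyclic_om (reorient A C)"
    then obtain Y where Y: "Y \<in> C" "snd (reor A Y) = {}" unfolding acyclic_om_def reorient_def by blast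
    have "supp Y \<subseteq> E" using om_supp[OF om Y(1)] .
    then show "bad E C A {} {}" unfolding bad_def using Y by blast
  qed
  then show "p \<in> Nset E C 0 \<longleftrightarrow> p \<in> (\<lambda>A. ({}, A)) ` acyc_reorientations E C"
    using Nset_mem[OF om, of N A 0] empty_NBC[OF om ll] p
    by (auto simp: Eprefix_0 acyc_reorientations_def)
qed

lemma Nsetm:
  fixes E :: "'a::linorder set"
  assumes om: "oriented_matroid E C"
  shows "Nset E C (card E) = (\<lambda>N. (N, {})) ` NBC E C"
proof (rule set_eqI)
  fix p :: "'a set \<times> 'a set"
  obtain N A where p: "p = (N, A)" by (cases p)
  have fin: "finite E" using om unfolding oriented_matroid_def by simp
  have nb: "\<not> bad E C {} N (E - N)" if "N \<in> NBC E C" for N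
  proof
    assume "bad E C {} N (E - N)"
    then obtain Y where "Y \<in> C" "supp Y \<subseteq> E - (E - N)" unfolding bad_def by blast
    then show False using NBC_indep[OF that] by blast
  qed
  have NE: "N \<in> NBC E C \<Longrightarrow> N \<subseteq> E" for N unfolding NBC_def by blast
  show "p \<in> Nset E C (card E) \<longleftrightarrow> p \<in> (\<lambda>N. (N, {})) ` NBC E C"
    using Nset_mem[OF om, of N A "card E"] p nb NE
    by (auto simp: Eprefix_card[OF fin])
qed

theorem mainTheorem1:
  fixes E :: "'a::linorder set" and C :: "'a signed set"
  assumes "oriented_matroid E C" and "loopless C"
  shows "(\<forall>k\<in>{1..card E}. bij_betw (psi E C k) (Nset E C (k - 1)) (Nset E C k)) \<and>
         bij_betw (\<lambda>A. THE N. psi_comp E C (card E) ({}, A) = (N, {}))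
                  (acyc_reorientations E C) (NBC E C)"
proof
  note om = assms(1)
  show "\<forall>k\<in>{1..card E}. bij_betw (psi E C k) (Nset E C (k - 1)) (Nset E C k)"
    using step_bij[OF om] by auto
  have cb: "bij_betw (psi_comp E C (card E)) (Nset E C 0) (Nset E C (card E))"
    by (rule comp_bij[OF om]) simp
  have b1: "bij_betw (\<lambda>A. ({}, A)) (acyc_reorientations E C) (Nset E C 0)"
    unfolding Nset0[OF om assms(2)] by (rule bij_betw_imageI) (auto simp: inj_on_def)
  have b3: "bij_betw fst (Nset E C (card E)) (NBC E C)"
    unfolding Nsetm[OF om] by (rule bij_betw_imageI) (auto simp: inj_on_def image_image)
  have b: "bij_betw (fst \<circ> (psi_comp E C (card E) \<circ> (\<lambda>A. ({}, A)))) (acyc_reorientations E C) (NBC E C)"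
    by (rule bij_betw_trans[OF bij_betw_trans[OF b1 cb] b3])
  show "bij_betw (\<lambda>A. THE N. psi_comp E C (card E) ({}, A) = (N, {})) (acyc_reorientations E C) (NBC E C)"
  proof (rule bij_betw_cong[THEN iffD1, OF _ b])
    fix A assume A: "A \<in> acyc_reorientations E C"
    have "psi_comp E C (card E) ({}, A) \<in> Nset E C (card E)"
      using b1 cb A by (meson bij_betwE)
    then obtain N where N: "psi_comp E C (card E) ({}, A) = (N, {})" unfolding Nsetm[OF om] by blast
    then show "(fst \<circ> (psi_comp E C (card E) \<circ> (\<lambda>A. ({}, A)))) A = (THE N. psi_comp E C (card E) ({}, A) = (N, {}))"
      by simp
  qed
qed

end
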